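(* Let $N \geq 5$ be an odd integer and $\kappa$ a real number. Let $a>0$ and $b$ be real numbers such that the data set $(X_1,\dots,X_N)$ consisting of $X_1 = a$, of $\tfrac{N-1}{2}$ points equal to $b - \tfrac{a}{N-1}$, and of $\tfrac{N-1}{2}$ points equal to $-b - \tfrac{a}{N-1}$ satisfies $\mathbb{E}(X)=0$, $\mathbb{E}(X^2)=1$ and $\mathbb{E}(X^4)=\kappa$. Then $$\mathbb{E}(X^3) = \frac{-3}{N-1}\, a + \frac{N+1}{(N-1)^2}\, a^3 .$$ Furthermore, when $a = a(N,\kappa) = \sqrt{ \frac{N-1}{N+1} + \sqrt{ ( \frac{N-1}{N+1} )^2 - G(N,\kappa)}}$ with $G(N,\kappa) = \frac{N(N-1)^2 - (N-1)^3 \kappa}{(N+1)(N-3)}$ and $\kappa>1$ fixed, one has $\mathbb{E}(X^3) \sim -3 (\kappa - 1)^{1/4} N^{-3/4} + (\kappa - 1)^{3/4} N^{-1/4}$ as $N \to \infty$.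
   Context: For a finite data set $(X_1,\dots,X_N)$ and a function $f$, $\mathbb{E}(f(X))$ denotes the empirical mean $\frac1N\sum_{i=1}^N f(X_i)$. *)

theory Defs
  imports "HOL-Library.Landau_Symbols"
begin

definition emp_mean :: "(real \<Rightarrow> real) \<Rightarrow> real list \<Rightarrow> real" where
  "emp_mean f xs = (\<Sum>x\<leftarrow>xs. f x) / real (length xs)"

definition data_set :: "nat \<Rightarrow> real \<Rightarrow> real \<Rightarrow> real list" where
  "data_set N a b =
     a # replicate ((N - 1) div 2) (b - a / real (N - 1))
       @ replicate ((N - 1) div 2) (- b - a / real (N - 1))"

definition G_fun :: "nat \<Rightarrow> real \<Rightarrow> real" where
  "G_fun N \<kappa> = (real N * (real N - 1)^2 - (real N - 1)^3 * \<kappa>)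
                 / ((real N + 1) * (real N - 3))"

definition a_fun :: "nat \<Rightarrow> real \<Rightarrow> real" where
  "a_fun N \<kappa> = sqrt ((real N - 1) / (real N + 1)
        + sqrt (((real N - 1) / (real N + 1))^2 - G_fun N \<kappa>))"

end

theory Submission
  imports Defs "HOL-Real_Asymp.Real_Asymp"
begin

lemma alg3: "(M::real)>0 \<Longrightarrow> (a^3 - 3*(a/(2*M))*(2*M+1 - a^2 - 2*M*(a/(2*M))^2) - 2*M*(a/(2*M))^3)/(2*M+1) = -3/(2*M)*a + (2*M+2)/(2*M)^2*a^3"
proof -
  assume M: "M > 0"
  have "a^3 - 3*(a/(2*M))*(2*M+1 - a^2 - 2*M*(a/(2*M))^2) - 2*M*(a/(2*M))^3 = (-3/(2*M)*a + (2*M+2)/(2*M)^2*a^3) * (2*M+1)"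
    using M by (simp add: field_simps power2_eq_square power3_eq_cube)
  then show ?thesis using M by (simp add: divide_eq_eq)
qed

lemma part1_gen:
  fixes m :: nat and a b :: real
  assumes m: "m > 0"
    and h2: "emp_mean (\<lambda>x. x^2) (data_set (2*m+1) a b) = 1"
  shows "emp_mean (\<lambda>x. x^3) (data_set (2*m+1) a b)
          = (-3) / (real (2*m+1) - 1) * a + (real (2*m+1) + 1) / (real (2*m+1) - 1)^2 * a^3"
proof -
  define c where "c = a / (2*m)"
  have ds: "data_set (2*m+1) a b = a # replicate m (b - c) @ replicate m (- b - c)"
    by (simp add: data_set_def c_def)
  have e2: "a^2 + m*((b-c)^2 + (-b-c)^2) = 2*m+1"
    using h2 m unfolding ds by (simp add: emp_mean_def sum_list_replicate field_simps)
  have e3: "emp_mean (\<lambda>x. x^3) (data_set (2*m+1) a b) = (a^3 + m*((b-c)^3 + (-b-c)^3)) / (2*m+1)"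
    unfolding ds by (simp add: emp_mean_def sum_list_replicate algebra_simps)
  have bb: "2*m*b^2 = 2*m+1 - a^2 - 2*m*c^2" using e2 unfolding power2_eq_square by (simp add: algebra_simps)
  have "a^3 + m*((b-c)^3 + (-b-c)^3) = a^3 - 3*c*(2*m*b^2) - 2*m*c^3"
    by (simp add: power3_eq_cube power2_eq_square algebra_simps)
  also have "\<dots> = a^3 - 3*c*(2*m+1 - a^2 - 2*m*c^2) - 2*m*c^3" by (simp only: bb)
  finally have s: "a^3 + m*((b-c)^3 + (-b-c)^3) = a^3 - 3*c*(2*m+1 - a^2 - 2*m*c^2) - 2*m*c^3" .
  have r1: "real (2*m+1) - 1 = 2 * real m" "real (2*m+1) + 1 = 2 * real m + 2" "real (2*m+1) = 2 * real m + 1" by simp_all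
  have "emp_mean (\<lambda>x. x^3) (data_set (2*m+1) a b) = (a^3 - 3*c*(2*m+1 - a^2 - 2*m*c^2) - 2*m*c^3) / (2*m+1)"
    by (simp only: e3 s)
  also have "\<dots> = -3/(2*real m)*a + (2*real m+2)/(2*real m)^2*a^3"
    using m alg3[of "real m" a] unfolding c_def by (simp add: add.commute)
  finally show ?thesis by simp
qed

definition AA :: "real \<Rightarrow> real \<Rightarrow> real" where
  "AA q x = sqrt ((x - 1) / (x + 1)
        + sqrt (((x - 1) / (x + 1))^2 - (x * (x - 1)^2 - (x - 1)^3 * (1+q))
                 / ((x + 1) * (x - 3))))"

definition FF :: "real \<Rightarrow> real \<Rightarrow> real" where
  "FF q x = (-3) / (x - 1) * AA q x + (x + 1) / (x - 1)^2 * (AA q x)^3"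

definition HH :: "real \<Rightarrow> real \<Rightarrow> real" where
  "HH q x = -3 * q powr (1/4) * x powr (-3/4) + q powr (3/4) * x powr (-1/4)"

lemma qpow: "(q::real) > 0 \<Longrightarrow> ((q powr (1 / 2)) powr (1 / 2)) ^ 3 = q powr (3 / 4)"
proof -
  have "(q powr (1 / 2)) powr (1 / 2) = q powr (1/4)" by (simp add: powr_powr)
  moreover have "(q powr (1/4))^3 = q powr (1/4 + 1/4 + 1/4)"
    by (simp add: power3_eq_cube flip: powr_add)
  ultimately show ?thesis by simp
qed

lemma FF_lim: assumes q: "q > 0"
  shows "((\<lambda>x. FF q x * x powr (1/4)) \<longlongrightarrow> q powr (3/4)) at_top"
proof -
  have h: "q powr (3/4) = ((q powr (1 / 2)) powr (1 / 2)) ^ 3" using qpow[OF q] by simp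
  show ?thesis unfolding h FF_def AA_def using q by real_asymp
qed

lemma HH_lim: assumes q: "q > 0"
  shows "((\<lambda>x. HH q x * x powr (1/4)) \<longlongrightarrow> q powr (3/4)) at_top"
  unfolding HH_def using q by real_asymp

lemma FF_HH: assumes q: "q > 0"
  shows "FF q \<sim>[at_top] HH q"
proof (rule asymp_equivI')
  have "((\<lambda>x. (FF q x * x powr (1/4)) / (HH q x * x powr (1/4))) \<longlongrightarrow> q powr (3/4) / q powr (3/4)) at_top"
    using q by (intro tendsto_divide FF_lim HH_lim) auto
  then have "((\<lambda>x. (FF q x * x powr (1/4)) / (HH q x * x powr (1/4))) \<longlongrightarrow> 1) at_top"
    using q by simp
  moreover have "eventually (\<lambda>x. (FF q x * x powr (1/4)) / (HH q x * x powr (1/4)) = FF q x / HH q x) at_top"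
    using eventually_gt_at_top[of 0] by eventually_elim simp
  ultimately show "((\<lambda>x. FF q x / HH q x) \<longlongrightarrow> 1) at_top"
    using tendsto_cong by fastforce
qed

theorem proposition2:
  shows "(\<forall>(N::nat) (\<kappa>::real) (a::real) (b::real).
            odd N \<and> N \<ge> 5 \<and> a > 0
            \<and> emp_mean (\<lambda>x. x) (data_set N a b) = 0
            \<and> emp_mean (\<lambda>x. x^2) (data_set N a b) = 1
            \<and> emp_mean (\<lambda>x. x^4) (data_set N a b) = \<kappa>
          \<longrightarrow> emp_mean (\<lambda>x. x^3) (data_set N a b)
                = (-3) / (real N - 1) * a + (real N + 1) / (real N - 1)^2 * a^3)
       \<and> (\<forall>(\<kappa>::real) (b::nat \<Rightarrow> real).
            \<kappa> > 1
            \<and> (\<forall>\<^sub>F k in at_top.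
                 emp_mean (\<lambda>x. x) (data_set (2*k+1) (a_fun (2*k+1) \<kappa>) (b (2*k+1))) = 0
               \<and> emp_mean (\<lambda>x. x^2) (data_set (2*k+1) (a_fun (2*k+1) \<kappa>) (b (2*k+1))) = 1
               \<and> emp_mean (\<lambda>x. x^4) (data_set (2*k+1) (a_fun (2*k+1) \<kappa>) (b (2*k+1))) = \<kappa>)
          \<longrightarrow> (\<lambda>k::nat. emp_mean (\<lambda>x. x^3)
                          (data_set (2*k+1) (a_fun (2*k+1) \<kappa>) (b (2*k+1))))
              \<sim>[at_top]
              (\<lambda>k::nat. -3 * (\<kappa> - 1) powr (1/4) * real (2*k+1) powr (-3/4)
                        + (\<kappa> - 1) powr (3/4) * real (2*k+1) powr (-1/4)))"
proof (intro conjI allI impI; (elim conjE)?)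
  fix N :: nat and \<kappa> a b :: real
  assume "odd N" "N \<ge> 5" and h2: "emp_mean (\<lambda>x. x^2) (data_set N a b) = 1"
  define m where "m = N div 2"
  have m: "N = 2*m+1" "m > 0" using \<open>odd N\<close> \<open>N \<ge> 5\<close> unfolding m_def
    by (simp_all add: odd_two_times_div_two_succ)
  show "emp_mean (\<lambda>x. x^3) (data_set N a b)
                = (-3) / (real N - 1) * a + (real N + 1) / (real N - 1)^2 * a^3"
    using part1_gen[of m a b] h2 m by simp
next
  fix \<kappa> :: real and b :: "nat \<Rightarrow> real"
  assume k1: "\<kappa> > 1" and ev: "\<forall>\<^sub>F k in at_top.
                 emp_mean (\<lambda>x. x) (data_set (2*k+1) (a_fun (2*k+1) \<kappa>) (b (2*k+1))) = 0
               \<and> emp_mean (\<lambda>x. x^2) (data_set (2*k+1) (a_fun (2*k+1) \<kappa>) (b (2*k+1))) = 1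
               \<and> emp_mean (\<lambda>x. x^4) (data_set (2*k+1) (a_fun (2*k+1) \<kappa>) (b (2*k+1))) = \<kappa>"
  define q where "q = \<kappa> - 1"
  have q: "q > 0" and kq: "\<kappa> = 1 + q" using k1 by (auto simp: q_def)
  have af: "a_fun N \<kappa> = AA q (real N)" for N
    by (simp add: a_fun_def AA_def G_fun_def kq)
  have lim: "filterlim (\<lambda>k::nat. real (2*k+1)) at_top at_top" by real_asymp
  have c1: "(\<lambda>k::nat. FF q (real (2*k+1))) \<sim>[at_top] (\<lambda>k. HH q (real (2*k+1)))"
    by (rule asymp_equiv_compose'[OF FF_HH[OF q] lim])
  have e1: "eventually (\<lambda>k. FF q (real (2*k+1)) = emp_mean (\<lambda>x. x^3)
                          (data_set (2*k+1) (a_fun (2*k+1) \<kappa>) (b (2*k+1)))) at_top"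
    using ev eventually_gt_at_top[of "0::nat"]
  proof eventually_elim
    case (elim k)
    show ?case using part1_gen[of k "a_fun (2*k+1) \<kappa>" "b (2*k+1)"] elim
      by (simp add: FF_def af)
  qed
  have e2: "eventually (\<lambda>k. HH q (real (2*k+1)) = -3 * (\<kappa> - 1) powr (1/4) * real (2*k+1) powr (-3/4)
                        + (\<kappa> - 1) powr (3/4) * real (2*k+1) powr (-1/4)) at_top"
    by (simp add: HH_def q_def)
  show "(\<lambda>k::nat. emp_mean (\<lambda>x. x^3)
                          (data_set (2*k+1) (a_fun (2*k+1) \<kappa>) (b (2*k+1))))
              \<sim>[at_top]
              (\<lambda>k::nat. -3 * (\<kappa> - 1) powr (1/4) * real (2*k+1) powr (-3/4)
                        + (\<kappa> - 1) powr (3/4) * real (2*k+1) powr (-1/4))"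
    by (rule asymp_equiv_transfer[OF c1 e1 e2])
qed

end
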